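(* Let $\mathcal{Y}=\{1,\dots,K\}$ and let $P,Q$ be a source and a target distribution on $\mathcal{X}\times\mathcal{Y}$ with label marginals $p(y),q(y)$, satisfying the label shift assumption $q(x\mid y)=p(x\mid y)$ for all $y$, and such that the likelihood ratios $w(y)=q(y)/p(y)$ are well defined and known for all $y\in\mathcal{Y}$. Let $\{(X_i,Y_i)\}_{i\in\mathcal{I}_1}$ be training data, and let $\widehat{\pi}:\mathcal{X}\to\Delta_K$ be a probabilistic predictor computed from the training data only. Let $(X_1,Y_1),\dots,(X_n,Y_n)$ (the calibration set $\mathcal{I}_2$) be i.i.d. from $P$, let $(X_{n+1},Y_{n+1})$ be drawn from $Q$ independently, and let $U_1,\dots,U_{n+1}$ be i.i.d. $\mathrm{Unif}([0,1])$ independent of everything else. Define, for $x\in\mathcal{X}$, $y\in\mathcal{Y}$, $u\in[0,1]$, $$\rho_y(x;\widehat{\pi})=\sum_{y'=1}^K \widehat{\pi}_{y'}(x)\,\mathbf{1}\{\widehat{\pi}_{y'}(x)>\widehat{\pi}_y(x)\},\qquad r(x,y,u;\widehat{\pi})=\rho_y(x;\widehat{\pi})+u\cdot\widehat{\pi}_y(x),$$ and $r_i=r(X_i,Y_i,U_i;\widehat{\pi})$ for $i=1,\dots,n$. For each $y\in\mathcal{Y}$ set $$\tilde p_i^w(y)=\frac{w(Y_i)}{\sum_{j=1}^n w(Y_j)+w(y)}\ (i=1,\dots,n),\qquad \tilde p_{n+1}^w(y)=\frac{w(y)}{\sum_{j=1}^n w(Y_j)+w(y)},$$ $$\tau^\star_w(y)=Q_{1-\alpha}\Big(\sum_{i=1}^n\tilde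 p_i^w(y)\,\delta_{r_i}+\tilde p_{n+1}^w(y)\,\delta_1\Big),$$ and define the prediction set $\mathcal{F}^{(w)}_{\tau^\star}(x,u;\widehat{\pi})=\{y\in\mathcal{Y}:\rho_y(x;\widehat{\pi})+u\cdot\widehat{\pi}_y(x)\le\tau^\star_w(y)\}$. Then for any $\alpha\in(0,1)$, $$\mathbb{P}\big(Y_{n+1}\in\mathcal{F}^{(w)}_{\tau^\star}(X_{n+1},U_{n+1};\widehat{\pi})\ \big|\ \{(X_i,Y_i)\}_{i\in\mathcal{I}_1}\big)\ge 1-\alpha.$$
   Context: $\Delta_K$ denotes the probability simplex in $\mathbb{R}^K$ and $\widehat{\pi}_y(x)$ is the $y$-th coordinate of $\widehat{\pi}(x)$. For a distribution $F$ on $\mathbb{R}$, $Q_\beta(F)=\inf\{z:F(z)\ge\beta\}$ denotes its $\beta$-quantile (with $F$ also denoting its CDF); $\delta_a$ is the point mass at $a$. *)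

theory Defs
  imports "HOL-Probability.Probability"
begin

text \<open>Labels are 1..K. A probabilistic predictor is pihat :: 'x => nat => real,
  with pihat x y the y-th coordinate.\<close>

definition in_simplex :: "nat \<Rightarrow> (nat \<Rightarrow> real) \<Rightarrow> bool" where
  "in_simplex K v \<longleftrightarrow> (\<forall>y\<in>{1..K}. 0 \<le> v y) \<and> (\<Sum>y=1..K. v y) = 1"

definition rho :: "nat \<Rightarrow> ('x \<Rightarrow> nat \<Rightarrow> real) \<Rightarrow> 'x \<Rightarrow> nat \<Rightarrow> real" where
  "rho K pihat x y = (\<Sum>y'=1..K. pihat x y' * (if pihat x y' > pihat x y then 1 else 0))"

definition rscore :: "nat \<Rightarrow> ('x \<Rightarrow> nat \<Rightarrow> real) \<Rightarrow> 'x \<Rightarrow> nat \<Rightarrow> real \<Rightarrow> real" where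
  "rscore K pihat x y u = rho K pihat x y + u * pihat x y"

definition quantile :: "real \<Rightarrow> (real \<Rightarrow> real) \<Rightarrow> real" where
  "quantile \<beta> F = Inf {z. F z \<ge> \<beta>}"

text \<open>CDF of  sum_i p_i^w(y) delta_{r_i} + p_{n+1}^w(y) delta_1.\<close>
definition wcdf :: "(nat \<Rightarrow> real) \<Rightarrow> nat \<Rightarrow> (nat \<Rightarrow> nat) \<Rightarrow> (nat \<Rightarrow> real) \<Rightarrow> nat \<Rightarrow> real \<Rightarrow> real" where
  "wcdf w n Ys rs y z =
     (let S = (\<Sum>j=1..n. w (Ys j)) + w y in
      (\<Sum>i=1..n. (w (Ys i) / S) * (if rs i \<le> z then 1 else 0))
      + (w y / S) * (if (1::real) \<le> z then 1 else 0))"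

definition tau_star :: "(nat \<Rightarrow> real) \<Rightarrow> nat \<Rightarrow> (nat \<Rightarrow> nat) \<Rightarrow> (nat \<Rightarrow> real) \<Rightarrow> real \<Rightarrow> nat \<Rightarrow> real" where
  "tau_star w n Ys rs \<alpha> y = quantile (1 - \<alpha>) (wcdf w n Ys rs y)"

definition pred_set :: "nat \<Rightarrow> ('x \<Rightarrow> nat \<Rightarrow> real) \<Rightarrow> (nat \<Rightarrow> real) \<Rightarrow> 'x \<Rightarrow> real \<Rightarrow> nat set" where
  "pred_set K pihat tau x u = {y \<in> {1..K}. rscore K pihat x y u \<le> tau y}"

end

theory Submission
  imports Defs
begin


definition Fd :: "nat set \<Rightarrow> (nat \<Rightarrow> real) \<Rightarrow> (nat \<Rightarrow> real) \<Rightarrow> real \<Rightarrow> real" where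
  "Fd A a r z = (\<Sum>i\<in>A. a i * (if r i \<le> z then 1 else 0))"

lemma Fd_eq_sub:
  assumes "finite A"
  shows "Fd A a r z = (\<Sum>i\<in>{i\<in>A. r i \<le> z}. a i)"
  unfolding Fd_def using assms by (simp add: sum.inter_filter[symmetric] if_distrib cong: if_cong)

lemma quant_min:
  assumes A: "finite A" and a: "\<forall>i\<in>A. 0 \<le> a i" and s: "(\<Sum>i\<in>A. a i) = 1"
    and b: "0 < \<beta>" "\<beta> \<le> 1"
  shows "\<exists>c\<in>r ` A. Fd A a r c \<ge> \<beta> \<and> (\<forall>z. Fd A a r z \<ge> \<beta> \<longrightarrow> c \<le> z)
          \<and> Inf {z. Fd A a r z \<ge> \<beta>} = c"
proof -
  have Ane: "A \<noteq> {}" using s by auto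
  define C where "C = {c \<in> r ` A. Fd A a r c \<ge> \<beta>}"
  have fC: "finite C" using A unfolding C_def by auto
  have "Max (r ` A) \<in> C"
  proof -
    have "Fd A a r (Max (r ` A)) = 1"
      unfolding Fd_def using A s by (auto intro!: sum.cong)
    thus ?thesis unfolding C_def using A Ane b by auto
  qed
  hence Cne: "C \<noteq> {}" by auto
  define c where "c = Min C"
  have cC: "c \<in> C" using fC Cne c_def by auto
  have low: "c \<le> z" if z: "Fd A a r z \<ge> \<beta>" for z
  proof -
    define B where "B = {i\<in>A. r i \<le> z}"
    have fB: "finite B" using A B_def by auto
    have "B \<noteq> {}"
    proof
      assume "B = {}"
      hence "Fd A a r z = 0" unfolding Fd_def B_def by (auto intro!: sum.neutral)
      thus False using z b by simp
    qed
    define c' where "c' = Max (r ` B)"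
    have c'z: "c' \<le> z" using fB \<open>B \<noteq> {}\<close> B_def c'_def by auto
    have "\<forall>i\<in>A. (r i \<le> c') = (r i \<le> z)"
      using c'z fB B_def c'_def by (auto intro: Max_ge)
    hence "Fd A a r c' = Fd A a r z" unfolding Fd_def by (auto intro!: sum.cong)
    moreover have "c' \<in> r ` A"
    proof -
      have "c' \<in> r ` B" using fB \<open>B \<noteq> {}\<close> c'_def Max_in[of "r ` B"] by auto
      thus ?thesis using B_def by auto
    qed
    ultimately have "c' \<in> C" using z C_def by auto
    hence "c \<le> c'" using fC c_def by auto
    thus ?thesis using c'z by simp
  qed
  have "Inf {z. Fd A a r z \<ge> \<beta>} = c"
    by (rule cInf_eq_minimum) (use cC C_def low in auto)
  thus ?thesis using cC C_def low by auto
qed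

lemma quant_char:
  assumes A: "finite A" and a: "\<forall>i\<in>A. 0 \<le> a i" and s: "(\<Sum>i\<in>A. a i) = 1"
    and b: "0 < \<beta>" "\<beta> \<le> 1"
  shows "(x \<le> Inf {z. Fd A a r z \<ge> \<beta>}) \<longleftrightarrow> (\<forall>i\<in>A. Fd A a r (r i) \<ge> \<beta> \<longrightarrow> x \<le> r i)"
proof -
  obtain c where c: "c \<in> r ` A" "Fd A a r c \<ge> \<beta>" "\<forall>z. Fd A a r z \<ge> \<beta> \<longrightarrow> c \<le> z"
    "Inf {z. Fd A a r z \<ge> \<beta>} = c" using quant_min[OF assms] by blast
  show ?thesis using c by (auto intro: order_trans)
qed

lemma core:
  assumes A: "finite A" and a: "\<forall>i\<in>A. 0 \<le> a i" and r1: "\<forall>i\<in>A. r i \<le> 1"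
    and b: "0 < \<beta>" "\<beta> \<le> 1"
  shows "(\<Sum>k\<in>A. a k * (if r k \<le> Inf {z. Fd A (\<lambda>j. a j / (\<Sum>i\<in>A. a i)) (r(k:=1)) z \<ge> \<beta>} then 1 else 0))
          \<ge> \<beta> * (\<Sum>i\<in>A. a i)"
proof (cases "(\<Sum>i\<in>A. a i) = 0")
  case True
  hence "\<forall>i\<in>A. a i = 0" using sum_nonneg_eq_0_iff[OF A] a by blast
  thus ?thesis using True by simp
next
  case False
  define W where "W = (\<Sum>i\<in>A. a i)"
  have Wp: "W > 0" using False a W_def by (metis less_eq_real_def sum_nonneg)
  define a' where "a' = (\<lambda>j. a j / W)"
  have a': "\<forall>i\<in>A. 0 \<le> a' i" using a Wp a'_def by auto
  have s': "(\<Sum>i\<in>A. a' i) = 1" using Wp unfolding a'_def W_def by (simp add: sum_divide_distrib[symmetric])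
  obtain c where c: "c \<in> r ` A" "Fd A a' r c \<ge> \<beta>" "\<forall>z. Fd A a' r z \<ge> \<beta> \<longrightarrow> c \<le> z"
    using quant_min[OF A a' s' b] by blast
  have step: "r k \<le> Inf {z. Fd A a' (r(k:=1)) z \<ge> \<beta>}" if k: "k \<in> A" "r k \<le> c" for k
  proof -
    obtain ck where ck: "Fd A a' (r(k:=1)) ck \<ge> \<beta>" "Inf {z. Fd A a' (r(k:=1)) z \<ge> \<beta>} = ck"
      using quant_min[OF A a' s' b, of "r(k:=1)"] by blast
    have "Fd A a' (r(k:=1)) ck \<le> Fd A a' r ck"
      unfolding Fd_def using a' r1 k by (intro sum_mono) (auto intro: mult_left_mono)
    hence "c \<le> ck" using c ck by auto
    thus ?thesis using ck k by simp
  qed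
  have "\<beta> * W \<le> Fd A a' r c * W" using c Wp by simp
  also have "Fd A a' r c * W = (\<Sum>k\<in>A. a k * (if r k \<le> c then 1 else 0))"
    unfolding Fd_def a'_def using Wp by (simp add: sum_distrib_right)
  also have "\<dots> \<le> (\<Sum>k\<in>A. a k * (if r k \<le> Inf {z. Fd A a' (r(k:=1)) z \<ge> \<beta>} then 1 else 0))"
    using step a by (intro sum_mono) auto
  finally show ?thesis unfolding W_def a'_def by simp
qed



lemma wl_meas:
  assumes "sets P = sets (MX \<Otimes>\<^sub>M count_space {1..K})"
  shows "(\<lambda>a. f (snd a)) \<in> borel_measurable P"
proof -
  have "(\<lambda>a. f (snd a)) \<in> borel_measurable (MX \<Otimes>\<^sub>M count_space {1..K})"
    by (rule measurable_compose[OF measurable_snd]) (simp add: measurable_count_space_eq1)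
  thus ?thesis using measurable_cong_sets[OF assms refl] by blast
qed

lemma Q_density:
  fixes P Q :: "('x \<times> nat) measure" and MX :: "'x measure"
  assumes sP: "sets P = sets (MX \<Otimes>\<^sub>M count_space {1..K})"
    and sQ: "sets Q = sets (MX \<Otimes>\<^sub>M count_space {1..K})"
    and fP: "finite_measure P" and fQ: "finite_measure Q"
    and p_pos: "\<forall>y\<in>{1..K}. measure P (space MX \<times> {y}) > 0"
    and w_def: "\<forall>y\<in>{1..K}. w y = measure Q (space MX \<times> {y}) / measure P (space MX \<times> {y})"
    and label_shift: "\<forall>A\<in>sets MX. \<forall>y\<in>{1..K}.
          measure Q (A \<times> {y}) * measure P (space MX \<times> {y})
        = measure P (A \<times> {y}) * measure Q (space MX \<times> {y})"
  shows "Q = density P (\<lambda>a. ennreal (w (snd a)))"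
proof (rule measure_eqI)
  show "sets Q = sets (density P (\<lambda>a. ennreal (w (snd a))))" using sP sQ by simp
next
  fix B assume "B \<in> sets Q"
  hence BP: "B \<in> sets P" and BS: "B \<in> sets (MX \<Otimes>\<^sub>M count_space {1..K})" using sP sQ by auto
  have spP: "space P = space MX \<times> {1..K}"
    using sets_eq_imp_space_eq[OF sP] by (simp add: space_pair_measure)
  have spQ: "space Q = space MX \<times> {1..K}"
    using sets_eq_imp_space_eq[OF sQ] by (simp add: space_pair_measure)
  define Ay where "Ay = (\<lambda>y. (\<lambda>x. (x, y)) -` B \<inter> space MX)"
  have Ays: "Ay y \<in> sets MX" if "y \<in> {1..K}" for y
  proof -
    have "(\<lambda>x. (x, y)) \<in> measurable MX (MX \<Otimes>\<^sub>M count_space {1..K})"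
      using that by (intro measurable_Pair2') simp
    thus ?thesis unfolding Ay_def using BS by (rule measurable_sets)
  qed
  have Beq: "B \<inter> (space MX \<times> {y}) = Ay y \<times> {y}" for y
    unfolding Ay_def by auto
  have BsubP: "B \<subseteq> space MX \<times> {1..K}" using sets.sets_into_space[OF BP] spP by simp
  have Bun: "B = (\<Union>y\<in>{1..K}. Ay y \<times> {y})"
    using BsubP unfolding Ay_def by auto
  have Ayt_sets: "Ay y \<times> {y} \<in> sets (MX \<Otimes>\<^sub>M count_space {1..K})" if "y \<in> {1..K}" for y
    using Ays[OF that] that by (intro pair_measureI) auto
  have disj: "disjoint_family_on (\<lambda>y. Ay y \<times> {y}) {1..K}"
    unfolding disjoint_family_on_def by auto
  have wnn: "w y \<ge> 0" if "y \<in> {1..K}" for y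
    using w_def that by auto
  have Qy: "emeasure Q (Ay y \<times> {y}) = ennreal (w y) * emeasure P (Ay y \<times> {y})" if y: "y \<in> {1..K}" for y
  proof -
    have pp: "measure P (space MX \<times> {y}) > 0" using p_pos y by auto
    have "measure Q (Ay y \<times> {y}) = w y * measure P (Ay y \<times> {y})"
      using label_shift Ays[OF y] y w_def pp by (auto simp: field_simps)
    thus ?thesis
      using finite_measure.emeasure_eq_measure[OF fQ] finite_measure.emeasure_eq_measure[OF fP]
        wnn[OF y] by (simp add: ennreal_mult)
  qed
  have "emeasure Q B = (\<Sum>y\<in>{1..K}. emeasure Q (Ay y \<times> {y}))"
    apply (subst Bun) apply (rule sum_emeasure[symmetric])
    using Ayt_sets sQ disj by auto
  also have "\<dots> = (\<Sum>y\<in>{1..K}. ennreal (w y) * emeasure P (Ay y \<times> {y}))"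
    using Qy by simp
  also have "\<dots> = (\<Sum>y\<in>{1..K}. \<integral>\<^sup>+a. ennreal (w y) * indicator (Ay y \<times> {y}) a \<partial>P)"
    using Ayt_sets sP by (intro sum.cong refl nn_integral_cmult_indicator[symmetric]) auto
  also have "\<dots> = \<integral>\<^sup>+a. (\<Sum>y\<in>{1..K}. ennreal (w y) * indicator (Ay y \<times> {y}) a) \<partial>P"
    using Ayt_sets sP by (intro nn_integral_sum[symmetric]) auto
  also have "\<dots> = \<integral>\<^sup>+a. ennreal (w (snd a)) * indicator B a \<partial>P"
  proof (rule nn_integral_cong)
    fix a assume "a \<in> space P"
    then obtain x y0 where a: "a = (x, y0)" "x \<in> space MX" "y0 \<in> {1..K}" using spP by auto
    have "(\<Sum>y\<in>{1..K}. ennreal (w y) * indicator (Ay y \<times> {y}) a)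
        = (\<Sum>y\<in>{1..K}. if y = y0 then ennreal (w y0) * indicator B a else 0)"
      using a unfolding Ay_def by (intro sum.cong refl) (auto simp: indicator_def)
    also have "\<dots> = ennreal (w y0) * indicator B a" using a by simp
    finally show "(\<Sum>y\<in>{1..K}. ennreal (w y) * indicator (Ay y \<times> {y}) a) = ennreal (w (snd a)) * indicator B a"
      using a by simp
  qed
  also have "\<dots> = emeasure (density P (\<lambda>a. ennreal (w (snd a)))) B"
    by (rule emeasure_density[symmetric]) (use wl_meas[OF sP] BP in auto)
  finally show "emeasure Q B = emeasure (density P (\<lambda>a. ennreal (w (snd a)))) B" .
qed



definition lab :: "(nat \<Rightarrow> ('x \<times> nat) \<times> real) \<Rightarrow> nat \<Rightarrow> nat" where
  "lab v i = snd (fst (v i))"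

definition sc :: "nat \<Rightarrow> ('x \<Rightarrow> nat \<Rightarrow> real) \<Rightarrow> (nat \<Rightarrow> ('x \<times> nat) \<times> real) \<Rightarrow> nat \<Rightarrow> real" where
  "sc K pihat v i = rscore K pihat (fst (fst (v i))) (snd (fst (v i))) (snd (v i))"

definition good :: "nat \<Rightarrow> ('x \<Rightarrow> nat \<Rightarrow> real) \<Rightarrow> (nat \<Rightarrow> real) \<Rightarrow> nat \<Rightarrow> real \<Rightarrow> (nat \<Rightarrow> ('x \<times> nat) \<times> real) \<Rightarrow> bool" where
  "good K pihat w n \<alpha> v \<longleftrightarrow> lab v (n+1) \<in> pred_set K pihat (tau_star w n (lab v) (sc K pihat v) \<alpha>)
      (fst (fst (v (n+1)))) (snd (v (n+1)))"

lemma Fd_cong: "(\<And>i. i \<in> A \<Longrightarrow> a i = a' i) \<Longrightarrow> (\<And>i. i \<in> A \<Longrightarrow> r i = r' i) \<Longrightarrow> Fd A a r z = Fd A a' r' z"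
  unfolding Fd_def by (auto intro!: sum.cong)

lemma Fd_reindex: "bij_betw \<sigma> A A \<Longrightarrow> Fd A (\<lambda>j. a (\<sigma> j)) (\<lambda>j. r (\<sigma> j)) z = Fd A a r z"
  unfolding Fd_def by (rule sum.reindex_bij_betw) 

lemma wcdf_Fd:
  "wcdf w n Ys rs y z = Fd {1..n+1} (\<lambda>j. w ((Ys(n+1:=y)) j) / (\<Sum>i\<in>{1..n+1}. w ((Ys(n+1:=y)) i))) (rs(n+1:=1)) z"
proof -
  have e: "(\<Sum>i\<in>{1..n+1}. w ((Ys(n+1:=y)) i)) = (\<Sum>j=1..n. w (Ys j)) + w y"
    by (simp add: sum.cl_ivl_Suc)
  show ?thesis unfolding wcdf_def Let_def Fd_def e
    by (simp add: sum.cl_ivl_Suc)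
qed

lemma if_same_app: "(if j = a then f a else f j) = f j" by simp

lemma good_iff:
  "good K pihat w n \<alpha> v \<longleftrightarrow> lab v (n+1) \<in> {1..K} \<and>
     sc K pihat v (n+1) \<le> Inf {z. Fd {1..n+1} (\<lambda>j. w (lab v j) / (\<Sum>i\<in>{1..n+1}. w (lab v i)))
                               ((sc K pihat v)(n+1:=1)) z \<ge> 1 - \<alpha>}"
  unfolding good_def pred_set_def tau_star_def quantile_def wcdf_Fd fun_upd_triv
  by (simp add: sc_def lab_def[symmetric] if_same_app)

lemma good_restrict: "good K pihat w n \<alpha> (restrict v {1..n+1}) = good K pihat w n \<alpha> v"
proof -
  have l: "lab (restrict v {1..n+1}) i = lab v i" if "i \<in> {1..n+1}" for i
    using that by (simp add: lab_def)
  have s: "sc K pihat (restrict v {1..n+1}) i = sc K pihat v i" if "i \<in> {1..n+1}" for i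
    using that by (simp add: sc_def)
  have W: "(\<Sum>i\<in>{1..n+1}. w (lab (restrict v {1..n+1}) i)) = (\<Sum>i\<in>{1..n+1}. w (lab v i))"
    using l by simp
  have F: "Fd {1..n+1} (\<lambda>j. w (lab (restrict v {1..n+1}) j) / (\<Sum>i\<in>{1..n+1}. w (lab v i)))
             ((sc K pihat (restrict v {1..n+1}))(n+1:=1)) z =
           Fd {1..n+1} (\<lambda>j. w (lab v j) / (\<Sum>i\<in>{1..n+1}. w (lab v i)))
             ((sc K pihat v)(n+1:=1)) z" for z
    by (rule Fd_cong) (use l s in auto)
  have n1: "n+1 \<in> {1..n+1}" by simp
  show ?thesis unfolding good_iff W F l[OF n1] s[OF n1] ..
qed

definition swp :: "nat \<Rightarrow> nat \<Rightarrow> nat \<Rightarrow> nat" where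
  "swp k m i = (if i = k then m else if i = m then k else i)"

lemma swp_bij: "k \<in> A \<Longrightarrow> m \<in> A \<Longrightarrow> bij_betw (swp k m) A A"
  unfolding bij_betw_def inj_on_def swp_def
  by (auto simp: image_def split: if_splits)

lemma good_perm:
  assumes k: "k \<in> {1..n+1}"
  shows "good K pihat w n \<alpha> (\<lambda>i\<in>{1..n+1}. v (swp k (n+1) i)) \<longleftrightarrow> lab v k \<in> {1..K} \<and>
     sc K pihat v k \<le> Inf {z. Fd {1..n+1} (\<lambda>j. w (lab v j) / (\<Sum>i\<in>{1..n+1}. w (lab v i)))
                               ((sc K pihat v)(k:=1)) z \<ge> 1 - \<alpha>}"
proof -
  define I where "I = {1..n+1::nat}"
  define \<sigma> where "\<sigma> = swp k (n+1)"
  define T where "T = (\<lambda>i\<in>I. v (\<sigma> i))"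
  have n1: "n+1 \<in> I" using I_def by simp
  have bij: "bij_betw \<sigma> I I" unfolding \<sigma>_def using k n1 I_def by (intro swp_bij) auto
  have l: "lab T i = lab v (\<sigma> i)" if "i \<in> I" for i
    using that by (simp add: lab_def T_def)
  have s: "sc K pihat T i = sc K pihat v (\<sigma> i)" if "i \<in> I" for i
    using that by (simp add: sc_def T_def)
  have sn: "\<sigma> (n+1) = k" unfolding \<sigma>_def swp_def by simp
  have W: "(\<Sum>i\<in>I. w (lab T i)) = (\<Sum>i\<in>I. w (lab v i))"
  proof -
    have "(\<Sum>i\<in>I. w (lab T i)) = (\<Sum>i\<in>I. w (lab v (\<sigma> i)))" using l by simp
    also have "\<dots> = (\<Sum>i\<in>I. w (lab v i))" by (rule sum.reindex_bij_betw[OF bij])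
    finally show ?thesis .
  qed
  have F: "Fd I (\<lambda>j. w (lab T j) / (\<Sum>i\<in>I. w (lab v i))) ((sc K pihat T)(n+1:=1)) z =
           Fd I (\<lambda>j. w (lab v j) / (\<Sum>i\<in>I. w (lab v i))) ((sc K pihat v)(k:=1)) z" for z
  proof -
    have "Fd I (\<lambda>j. w (lab T j) / (\<Sum>i\<in>I. w (lab v i))) ((sc K pihat T)(n+1:=1)) z =
          Fd I (\<lambda>j. (\<lambda>j. w (lab v j) / (\<Sum>i\<in>I. w (lab v i))) (\<sigma> j)) (\<lambda>j. ((sc K pihat v)(k:=1)) (\<sigma> j)) z"
    proof (rule Fd_cong)
      fix i assume i: "i \<in> I"
      show "w (lab T i) / (\<Sum>i\<in>I. w (lab v i)) = w (lab v (\<sigma> i)) / (\<Sum>i\<in>I. w (lab v i))"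
        using l[OF i] by simp
      show "((sc K pihat T)(n+1:=1)) i = ((sc K pihat v)(k:=1)) (\<sigma> i)"
        using s[OF i] sn unfolding \<sigma>_def swp_def by auto
    qed
    also have "\<dots> = Fd I (\<lambda>j. w (lab v j) / (\<Sum>i\<in>I. w (lab v i))) ((sc K pihat v)(k:=1)) z"
      by (rule Fd_reindex[OF bij])
    finally show ?thesis .
  qed
  show ?thesis
    unfolding T_def[symmetric] \<sigma>_def[symmetric] I_def[symmetric] good_iff W F l[OF n1] s[OF n1] sn ..
qed

lemma score_le1:
  assumes "in_simplex K (pihat x)" "y \<in> {1..K}" "0 \<le> u" "u \<le> 1"
  shows "rscore K pihat x y u \<le> 1"
proof -
  let ?p = "pihat x"
  have nn: "\<forall>y'\<in>{1..K}. 0 \<le> ?p y'" and s1: "(\<Sum>y'=1..K. ?p y') = 1"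
    using assms(1) unfolding in_simplex_def by auto
  have "rho K pihat x y = (\<Sum>y'\<in>{1..K}-{y}. ?p y' * (if ?p y' > ?p y then 1 else 0))"
    unfolding rho_def using assms(2) by (subst sum.remove[of _ y]) auto
  also have "\<dots> \<le> (\<Sum>y'\<in>{1..K}-{y}. ?p y')"
    using nn by (intro sum_mono) auto
  also have "\<dots> = 1 - ?p y" using s1 assms(2) by (subst (asm) sum.remove[of _ y]) auto
  finally have "rho K pihat x y \<le> 1 - ?p y" .
  moreover have "u * ?p y \<le> ?p y" using assms nn by (simp add: mult_left_le_one_le)
  ultimately show ?thesis unfolding rscore_def by simp
qed

lemma good_char_meas:
  assumes wnn: "\<forall>i\<in>{1..n+1}. w (lab v i) \<ge> 0" and a: "0 < \<alpha>" "\<alpha> < 1"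
  shows "good K pihat w n \<alpha> v \<longleftrightarrow> lab v (n+1) \<in> {1..K} \<and>
    (if (\<Sum>i\<in>{1..n+1}. w (lab v i)) = 0 then sc K pihat v (n+1) \<le> Inf ({}::real set)
     else (\<forall>j\<in>{1..n+1}. Fd {1..n+1} (\<lambda>j. w (lab v j) / (\<Sum>i\<in>{1..n+1}. w (lab v i)))
                               ((sc K pihat v)(n+1:=1)) (((sc K pihat v)(n+1:=1)) j) \<ge> 1 - \<alpha>
          \<longrightarrow> sc K pihat v (n+1) \<le> ((sc K pihat v)(n+1:=1)) j))"
proof (cases "(\<Sum>i\<in>{1..n+1}. w (lab v i)) = 0")
  case True
  have "{z. Fd {1..n+1} (\<lambda>j. w (lab v j) / (\<Sum>i\<in>{1..n+1}. w (lab v i))) ((sc K pihat v)(n+1:=1)) z \<ge> 1 - \<alpha>} = {}"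
    using True a unfolding Fd_def by simp
  thus ?thesis unfolding good_iff using True by simp
next
  case False
  have W: "(\<Sum>i\<in>{1..n+1}. w (lab v i)) > 0" using False wnn
    by (metis less_eq_real_def sum_nonneg)
  have s: "(\<Sum>j\<in>{1..n+1}. w (lab v j) / (\<Sum>i\<in>{1..n+1}. w (lab v i))) = 1"
    using W by (simp add: sum_divide_distrib[symmetric])
  show ?thesis unfolding good_iff using False
    by (subst quant_char) (use wnn W s a in auto)
qed



lemma score_meas:
  assumes pm: "\<forall>y\<in>{1..K}. (\<lambda>x. pihat x y) \<in> borel_measurable MX"
  shows "(\<lambda>s. rscore K pihat (fst (fst s)) (snd (fst s)) (snd s)) \<in> borel_measurable ((MX \<Otimes>\<^sub>M count_space {1..K}) \<Otimes>\<^sub>M borel)"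
proof (rule measurable_compose_countable'[where I="{1..K}" and g="\<lambda>s. snd (fst s)"])
  fix y assume y: "y \<in> {1..K}"
  have pm': "(\<lambda>x. pihat x y') \<in> borel_measurable MX" if "y' \<in> {1..K}" for y' using pm that by auto
  have m1: "(\<lambda>s. pihat (fst (fst s)) y') \<in> borel_measurable ((MX \<Otimes>\<^sub>M count_space {1..K}) \<Otimes>\<^sub>M borel)"
    if "y' \<in> {1..K}" for y'
    using measurable_compose[OF measurable_compose[OF measurable_fst measurable_fst] pm'[OF that]] .
  show "(\<lambda>s. rscore K pihat (fst (fst s)) y (snd s)) \<in> borel_measurable ((MX \<Otimes>\<^sub>M count_space {1..K}) \<Otimes>\<^sub>M borel)"
    unfolding rscore_def rho_def
    apply (intro borel_measurable_add borel_measurable_times borel_measurable_sum measurable_If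
       borel_measurable_const measurable_snd m1 y borel_measurable_less)
    apply (assumption | rule m1 y)+
    done
qed auto

theorem theorem2:
  fixes M :: "'a measure" and MX :: "'x measure"
    and P Q :: "('x \<times> nat) measure"
    and K n :: nat and w :: "nat \<Rightarrow> real"
    and pihat :: "'x \<Rightarrow> nat \<Rightarrow> real"
    and Z :: "nat \<Rightarrow> 'a \<Rightarrow> 'x \<times> nat" and U :: "nat \<Rightarrow> 'a \<Rightarrow> real"
    and \<alpha> :: real
  assumes "prob_space P" and "prob_space Q"
    and "sets P = sets (MX \<Otimes>\<^sub>M count_space {1..K})"
    and "sets Q = sets (MX \<Otimes>\<^sub>M count_space {1..K})"
    and p_pos: "\<forall>y\<in>{1..K}. measure P (space MX \<times> {y}) > 0"
    and w_def: "\<forall>y\<in>{1..K}. w y = measure Q (space MX \<times> {y}) / measure P (space MX \<times> {y})"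
    and label_shift: "\<forall>A\<in>sets MX. \<forall>y\<in>{1..K}.
          measure Q (A \<times> {y}) * measure P (space MX \<times> {y})
        = measure P (A \<times> {y}) * measure Q (space MX \<times> {y})"
    and pihat_simplex: "\<forall>x\<in>space MX. in_simplex K (pihat x)"
    and pihat_meas: "\<forall>y\<in>{1..K}. (\<lambda>x. pihat x y) \<in> borel_measurable MX"
    and "prob_space M"
    and indep: "prob_space.indep_vars M (\<lambda>i. (MX \<Otimes>\<^sub>M count_space {1..K}) \<Otimes>\<^sub>M borel)
                  (\<lambda>i \<omega>. (Z i \<omega>, U i \<omega>)) {1..n+1}"
    and distr_cal: "\<forall>i\<in>{1..n}. distr M ((MX \<Otimes>\<^sub>M count_space {1..K}) \<Otimes>\<^sub>M borel)
                  (\<lambda>\<omega>. (Z i \<omega>, U i \<omega>)) = P \<Otimes>\<^sub>M uniform_measure lborel {0..1}"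
    and distr_test: "distr M ((MX \<Otimes>\<^sub>M count_space {1..K}) \<Otimes>\<^sub>M borel)
                  (\<lambda>\<omega>. (Z (n+1) \<omega>, U (n+1) \<omega>)) = Q \<Otimes>\<^sub>M uniform_measure lborel {0..1}"
    and "0 < \<alpha>" and "\<alpha> < 1"
  shows "measure M {\<omega> \<in> space M.
           snd (Z (n+1) \<omega>) \<in> pred_set K pihat
              (tau_star w n (\<lambda>i. snd (Z i \<omega>))
                 (\<lambda>i. rscore K pihat (fst (Z i \<omega>)) (snd (Z i \<omega>)) (U i \<omega>)) \<alpha>)
              (fst (Z (n+1) \<omega>)) (U (n+1) \<omega>)} \<ge> 1 - \<alpha>"
proof -
  note sP = assms(3) and sQ = assms(4)
  interpret M: prob_space M by fact
  define \<beta> where "\<beta> = 1 - \<alpha>"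
  have b: "0 < \<beta>" "\<beta> \<le> 1" using assms \<beta>_def by auto
  define S where "S = (MX \<Otimes>\<^sub>M count_space {1..K}) \<Otimes>\<^sub>M (borel :: real measure)"
  define U0 where "U0 = uniform_measure lborel {0..1::real}"
  have pU0: "prob_space U0" unfolding U0_def by (rule prob_space_uniform_measure) auto
  define PU where "PU = P \<Otimes>\<^sub>M U0"
  define QU where "QU = Q \<Otimes>\<^sub>M U0"
  have pPU: "prob_space PU" unfolding PU_def by (rule prob_space_pair) (use assms pU0 in auto)
  have pQU: "prob_space QU" unfolding QU_def by (rule prob_space_pair) (use assms pU0 in auto)
  have sU0: "sets U0 = sets borel" unfolding U0_def by simp
  have sPU: "sets PU = sets S" unfolding PU_def S_def by (rule sets_pair_measure_cong[OF sP sU0])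
  have sQU: "sets QU = sets S" unfolding QU_def S_def by (rule sets_pair_measure_cong[OF sQ sU0])
  define Mi where "Mi = (\<lambda>i. if i = n+1 then QU else PU)"
  define I where "I = {1..n+1::nat}"
  define D where "D = PiM I (\<lambda>_. PU)"
  have sMi: "sets (Mi i) = sets S" for i using sPU sQU Mi_def by auto
  have pMi: "prob_space (Mi i)" for i using pPU pQU Mi_def by auto
  have sPiMi: "sets (PiM I Mi) = sets (PiM I (\<lambda>_. S))" by (rule sets_PiM_cong) (auto simp: sMi)
  have sD: "sets D = sets (PiM I (\<lambda>_. S))" unfolding D_def by (rule sets_PiM_cong) (auto simp: sPU)
  define X where "X = (\<lambda>i \<omega>. (Z i \<omega>, U i \<omega>))"
  have rv: "X i \<in> measurable M S" if "i \<in> I" for i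
    using indep that unfolding M.indep_vars_def2 X_def S_def I_def by auto
  have dX: "distr M (PiM I (\<lambda>_. S)) (\<lambda>\<omega>. \<lambda>i\<in>I. X i \<omega>) = PiM I Mi"
  proof -
    have "distr M (PiM I (\<lambda>_. S)) (\<lambda>\<omega>. \<lambda>i\<in>I. X i \<omega>) = PiM I (\<lambda>i. distr M S (X i))"
      using M.indep_vars_iff_distr_eq_PiM'[where I=I and M'="\<lambda>_. S" and X=X] indep rv
      unfolding I_def X_def S_def by auto
    also have "\<dots> = PiM I Mi"
    proof (rule PiM_cong[OF refl])
      fix i assume i: "i \<in> I"
      show "distr M S (X i) = Mi i"
      proof (cases "i = n+1")
        case True thus ?thesis using distr_test unfolding Mi_def X_def S_def QU_def U0_def by simp
      next
        case False hence "i \<in> {1..n}" using i I_def by auto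
        thus ?thesis using distr_cal False unfolding Mi_def X_def S_def PU_def U0_def by simp
      qed
    qed
    finally show ?thesis .
  qed
  define G where "G = {v \<in> space (PiM I (\<lambda>_. S)). good K pihat w n \<alpha> v}"
  have spS: "space S = (space MX \<times> {1..K}) \<times> UNIV" unfolding S_def by (simp add: space_pair_measure)
  have spPi: "v i \<in> (space MX \<times> {1..K}) \<times> UNIV" if "v \<in> space (PiM I (\<lambda>_. S))" "i \<in> I" for v i
    using that spS by (auto simp: space_PiM)
  have wnn: "w y \<ge> 0" if "y \<in> {1..K}" for y using w_def that by auto
  have scS: "(\<lambda>s. rscore K pihat (fst (fst s)) (snd (fst s)) (snd s)) \<in> borel_measurable S"
    unfolding S_def by (rule score_meas[OF pihat_meas])
  have labS: "(\<lambda>s. w (snd (fst s))) \<in> borel_measurable S"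
    unfolding S_def
    by (rule measurable_compose[OF measurable_compose[OF measurable_fst measurable_snd]])
       (simp add: measurable_count_space_eq1)
  have wl_m[measurable]: "(\<lambda>v. w (lab v i)) \<in> borel_measurable (PiM I (\<lambda>_. S))" for i
  proof (cases "i \<in> I")
    case True
    show ?thesis unfolding lab_def
      by (rule measurable_compose[OF measurable_component_singleton[OF True] labS])
  next
    case False
    have "(\<lambda>v. w (lab v i)) \<in> borel_measurable (PiM I (\<lambda>_. S)) \<longleftrightarrow> (\<lambda>v. w (lab (\<lambda>_. (undefined :: ('x \<times> nat) \<times> real)) i)) \<in> borel_measurable (PiM I (\<lambda>_. S))"
    proof (rule measurable_cong)
      fix v assume "v \<in> space (PiM I (\<lambda>_. S))"
      hence "v i = undefined" using False unfolding space_PiM by (rule PiE_arb)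
      thus "w (lab v i) = w (lab (\<lambda>_. (undefined :: ('x \<times> nat) \<times> real)) i)" by (simp add: lab_def)
    qed
    thus ?thesis by (simp only:) (rule borel_measurable_const)
  qed
  have sc_m[measurable]: "(\<lambda>v. sc K pihat v i) \<in> borel_measurable (PiM I (\<lambda>_. S))" for i
  proof (cases "i \<in> I")
    case True
    show ?thesis unfolding sc_def
      by (rule measurable_compose[OF measurable_component_singleton[OF True] scS])
  next
    case False
    have "(\<lambda>v. sc K pihat v i) \<in> borel_measurable (PiM I (\<lambda>_. S)) \<longleftrightarrow> (\<lambda>v. sc K pihat (\<lambda>_. (undefined :: ('x \<times> nat) \<times> real)) i) \<in> borel_measurable (PiM I (\<lambda>_. S))"
    proof (rule measurable_cong)
      fix v assume "v \<in> space (PiM I (\<lambda>_. S))"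
      hence "v i = undefined" using False unfolding space_PiM by (rule PiE_arb)
      thus "sc K pihat v i = sc K pihat (\<lambda>_. (undefined :: ('x \<times> nat) \<times> real)) i" by (simp add: sc_def)
    qed
    thus ?thesis by (simp only:) (rule borel_measurable_const)
  qed
  have Gs: "G \<in> sets (PiM I (\<lambda>_. S))"
  proof -
    have "G = {v \<in> space (PiM I (\<lambda>_. S)).
      (if (\<Sum>i\<in>I. w (lab v i)) = 0 then sc K pihat v (n+1) \<le> Inf ({}::real set)
       else (\<forall>j\<in>I. Fd I (\<lambda>j. w (lab v j) / (\<Sum>i\<in>I. w (lab v i)))
                               ((sc K pihat v)(n+1:=1)) (((sc K pihat v)(n+1:=1)) j) \<ge> 1 - \<alpha>
          \<longrightarrow> sc K pihat v (n+1) \<le> ((sc K pihat v)(n+1:=1)) j))}"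
    proof -
      have "good K pihat w n \<alpha> v \<longleftrightarrow> (if (\<Sum>i\<in>I. w (lab v i)) = 0 then sc K pihat v (n+1) \<le> Inf ({}::real set)
       else (\<forall>j\<in>I. Fd I (\<lambda>j. w (lab v j) / (\<Sum>i\<in>I. w (lab v i)))
                               ((sc K pihat v)(n+1:=1)) (((sc K pihat v)(n+1:=1)) j) \<ge> 1 - \<alpha>
          \<longrightarrow> sc K pihat v (n+1) \<le> ((sc K pihat v)(n+1:=1)) j))"
        if v: "v \<in> space (PiM I (\<lambda>_. S))" for v
      proof -
        have l: "lab v i \<in> {1..K}" if "i \<in> I" for i using spPi[OF v that] by (auto simp: lab_def)
        have "\<forall>i\<in>{1..n+1}. w (lab v i) \<ge> 0" using l wnn I_def by auto
        note gc = good_char_meas[OF this assms(14,15), of K pihat]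
        have "lab v (n+1) \<in> {1..K}" using l I_def by auto
        thus ?thesis using gc unfolding I_def by blast
      qed
      thus ?thesis unfolding G_def by (intro Collect_cong) blast
    qed
    also have "\<dots> \<in> sets (PiM I (\<lambda>_. S))"
    proof -
      have Wm[measurable]: "(\<lambda>v. \<Sum>i\<in>I. w (lab v i)) \<in> borel_measurable (PiM I (\<lambda>_. S))"
        by (rule borel_measurable_sum) (rule wl_m)
      have rm[measurable]: "(\<lambda>v. ((sc K pihat v)(n+1:=1)) j) \<in> borel_measurable (PiM I (\<lambda>_. S))" for j
        by (cases "j = n+1") (simp_all add: sc_m)
      have Fm[measurable]: "(\<lambda>v. Fd I (\<lambda>j. w (lab v j) / (\<Sum>i\<in>I. w (lab v i)))
                               ((sc K pihat v)(n+1:=1)) (((sc K pihat v)(n+1:=1)) j)) \<in> borel_measurable (PiM I (\<lambda>_. S))" for j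
        unfolding Fd_def
        by (intro borel_measurable_sum borel_measurable_times borel_measurable_divide measurable_If
            borel_measurable_const wl_m Wm rm borel_measurable_le)
      have fI: "finite I" unfolding I_def by simp
      have p1[measurable]: "Measurable.pred (PiM I (\<lambda>_. S)) (\<lambda>x. sc K pihat x (n + 1) \<le> ((sc K pihat x)(n + 1 := 1)) j)" for j
        unfolding pred_def by (rule borel_measurable_le[OF sc_m rm])
      have p2[measurable]: "{x \<in> space (Pi\<^sub>M I (\<lambda>_. S)). (\<Sum>i\<in>I. w (lab x i)) = 0} \<in> sets (Pi\<^sub>M I (\<lambda>_. S))"
        by (rule borel_measurable_eq[OF Wm borel_measurable_const])
      show ?thesis using fI by measurable
    qed
    finally show ?thesis .
  qed
  have Xm: "(\<lambda>\<omega>. \<lambda>i\<in>I. X i \<omega>) \<in> measurable M (PiM I (\<lambda>_. S))"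
    using rv by (intro measurable_restrict) auto
  have ev: "{\<omega> \<in> space M.
           snd (Z (n+1) \<omega>) \<in> pred_set K pihat
              (tau_star w n (\<lambda>i. snd (Z i \<omega>))
                 (\<lambda>i. rscore K pihat (fst (Z i \<omega>)) (snd (Z i \<omega>)) (U i \<omega>)) \<alpha>)
              (fst (Z (n+1) \<omega>)) (U (n+1) \<omega>)} = (\<lambda>\<omega>. \<lambda>i\<in>I. X i \<omega>) -` G \<inter> space M"
  proof -
    have "good K pihat w n \<alpha> (\<lambda>i\<in>I. X i \<omega>) = good K pihat w n \<alpha> (\<lambda>i. X i \<omega>)" for \<omega>
      unfolding I_def by (rule good_restrict)
    moreover have "good K pihat w n \<alpha> (\<lambda>i. X i \<omega>) \<longleftrightarrow> snd (Z (n+1) \<omega>) \<in> pred_set K pihat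
              (tau_star w n (\<lambda>i. snd (Z i \<omega>))
                 (\<lambda>i. rscore K pihat (fst (Z i \<omega>)) (snd (Z i \<omega>)) (U i \<omega>)) \<alpha>)
              (fst (Z (n+1) \<omega>)) (U (n+1) \<omega>)" for \<omega>
      unfolding good_def lab_def sc_def X_def by simp
    moreover have "(\<lambda>i\<in>I. X i \<omega>) \<in> space (PiM I (\<lambda>_. S))" if "\<omega> \<in> space M" for \<omega>
      using measurable_space[OF Xm that] .
    ultimately show ?thesis unfolding G_def by auto
  qed
  have mG: "measure M ((\<lambda>\<omega>. \<lambda>i\<in>I. X i \<omega>) -` G \<inter> space M) = measure (PiM I Mi) G"
    using measure_distr[OF Xm Gs] dX by simp
  have main: "emeasure (PiM I Mi) G \<ge> ennreal \<beta>"
  proof -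
    define wl where "wl = (\<lambda>s::('x \<times> nat) \<times> real. ennreal (w (snd (fst s))))"
    have GsD: "G \<in> sets D" using Gs sD by simp
    have GsMi: "G \<in> sets (PiM I Mi)" using Gs sPiMi by simp
    have spD: "space D = space (PiM I (\<lambda>_. S))" using sets_eq_imp_space_eq[OF sD] .
    have wlPU: "wl \<in> borel_measurable PU"
    proof -
      have "(\<lambda>s. w (snd (fst s))) \<in> borel_measurable PU"
        by (subst measurable_cong_sets[OF sPU refl]) (rule labS)
      thus ?thesis unfolding wl_def by (rule measurable_compose[OF _ measurable_ennreal])
    qed
    have fP: "finite_measure P" using assms(1) unfolding prob_space_def by simp
    have fQ: "finite_measure Q" using assms(2) unfolding prob_space_def by simp
    have Qd: "Q = density P (\<lambda>a. ennreal (w (snd a)))"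
      by (rule Q_density[OF sP sQ fP fQ p_pos w_def label_shift])
    have QUd: "QU = density PU wl"
    proof -
      have sfU0: "sigma_finite_measure U0" using pU0 by (rule prob_space_imp_sigma_finite)
      have "QU = density P (\<lambda>a. ennreal (w (snd a))) \<Otimes>\<^sub>M density U0 (\<lambda>_. 1)"
        unfolding QU_def density_1 using Qd by simp
      also have "\<dots> = density PU (\<lambda>(x, y). ennreal (w (snd x)) * 1)"
        unfolding PU_def
        by (rule pair_measure_density) (use wl_meas[OF sP] sfU0 in \<open>auto simp: density_1\<close>)
      also have "(\<lambda>(x, y). ennreal (w (snd x)) * 1) = wl" unfolding wl_def by (auto simp: fun_eq_iff)
      finally show ?thesis .
    qed
    define E where "E = emeasure (PiM I Mi) G"
    define T where "T = (\<lambda>k (v :: nat \<Rightarrow> ('x \<times> nat) \<times> real). \<lambda>i\<in>I. v (swp k (n+1) i))"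
    interpret PSi: product_sigma_finite Mi
      by (simp add: product_sigma_finite_def pMi prob_space_imp_sigma_finite)
    interpret PSP: product_sigma_finite "\<lambda>_. PU"
      by (simp add: product_sigma_finite_def pPU prob_space_imp_sigma_finite)
    have Ieq: "I = insert (n+1) {1..n}" unfolding I_def by auto
    have Tm: "T k \<in> measurable D D" if k: "k \<in> I" for k
    proof -
      have "swp k (n+1) i \<in> I" if "i \<in> I" for i
        using bij_betw_imp_funcset[OF swp_bij[OF k, of "n+1"]] that I_def by auto
      thus ?thesis unfolding T_def D_def by (intro measurable_restrict) auto
    qed
    have wlDm: "(\<lambda>v. wl (v k)) \<in> borel_measurable D" if k: "k \<in> I" for k
      unfolding D_def by (rule measurable_compose[OF measurable_component_singleton[OF k] wlPU])
    have fI: "finite I" unfolding I_def by simp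
    have cI: "card I = n + 1" unfolding I_def by simp
    have stepC: "E = (\<integral>\<^sup>+ v. wl (v (n+1)) * indicator G v \<partial>D)"
    proof -
      have nI: "n+1 \<notin> {1..n}" by simp
      have fIn: "finite {1..n}" by simp
      have GI: "G \<in> sets (PiM (insert (n+1) {1..n}) Mi)" using GsMi Ieq by simp
      have GD: "G \<in> sets (PiM (insert (n+1) {1..n}) (\<lambda>_. PU))" using GsD Ieq D_def by simp
      have PiMn: "PiM {1..n} Mi = PiM {1..n} (\<lambda>_. PU)"
        by (rule PiM_cong[OF refl]) (auto simp: Mi_def)
      have "E = (\<integral>\<^sup>+ v. indicator G v \<partial>PiM (insert (n+1) {1..n}) Mi)"
        unfolding E_def using GI Ieq by simp
      also have "\<dots> = (\<integral>\<^sup>+ x. (\<integral>\<^sup>+ y. indicator G (x(n+1 := y)) \<partial>(Mi (n+1))) \<partial>PiM {1..n} Mi)"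
        by (rule PSi.product_nn_integral_insert[OF fIn nI]) (use GI in simp)
      also have "\<dots> = (\<integral>\<^sup>+ x. (\<integral>\<^sup>+ y. wl y * indicator G (x(n+1 := y)) \<partial>PU) \<partial>PiM {1..n} (\<lambda>_. PU))"
        unfolding PiMn
      proof (rule nn_integral_cong)
        fix x assume x: "x \<in> space (PiM {1..n} (\<lambda>_. PU))"
        have "(\<lambda>y. indicator G (x(n+1 := y)) :: ennreal) \<in> borel_measurable PU"
          using measurable_compose[OF measurable_component_update[OF x nI] borel_measurable_indicator[OF GD]]
          by simp
        thus "(\<integral>\<^sup>+ y. indicator G (x(n+1 := y)) \<partial>(Mi (n+1))) = (\<integral>\<^sup>+ y. wl y * indicator G (x(n+1 := y)) \<partial>PU)"
          unfolding Mi_def using QUd by (simp add: nn_integral_density[OF wlPU])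
      qed
      also have "\<dots> = (\<integral>\<^sup>+ v. wl (v (n+1)) * indicator G v \<partial>PiM (insert (n+1) {1..n}) (\<lambda>_. PU))"
      proof -
        have mf: "(\<lambda>v. wl (v (n+1)) * indicator G v) \<in> borel_measurable (PiM (insert (n+1) {1..n}) (\<lambda>_. PU))"
        proof -
          have n1I: "n+1 \<in> insert (n+1) {1..n}" by simp
          show ?thesis
            by (intro borel_measurable_times_ennreal borel_measurable_indicator GD
              measurable_compose[OF measurable_component_singleton[OF n1I, where M="\<lambda>_. PU"] wlPU])
        qed
        show ?thesis using PSP.product_nn_integral_insert[OF fIn nI mf] by simp
      qed
      also have "\<dots> = (\<integral>\<^sup>+ v. wl (v (n+1)) * indicator G v \<partial>D)" unfolding D_def Ieq ..
      finally show ?thesis .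
    qed
    have n1I: "n+1 \<in> I" unfolding I_def by simp
    have mfD: "(\<lambda>v. wl (v (n+1)) * indicator G v) \<in> borel_measurable D"
      by (intro borel_measurable_times_ennreal borel_measurable_indicator GsD wlDm n1I)
    have stepE: "E = (\<integral>\<^sup>+ v. wl (v k) * indicator G (T k v) \<partial>D)" if k: "k \<in> I" for k
    proof -
      have bij: "bij_betw (swp k (n+1)) I I" by (rule swp_bij[OF k n1I])
      have dT: "distr D D (T k) = D"
        using distr_PiM_reindex[of I "\<lambda>_. PU" "swp k (n+1)" I] pPU bij_betw_imp_inj_on[OF bij]
          bij_betw_imp_funcset[OF bij]
        unfolding D_def T_def by simp
      have "E = (\<integral>\<^sup>+ v. wl (v (n+1)) * indicator G v \<partial>(distr D D (T k)))" using stepC dT by simp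
      also have "\<dots> = (\<integral>\<^sup>+ v. wl (T k v (n+1)) * indicator G (T k v) \<partial>D)"
        by (rule nn_integral_distr[OF Tm[OF k]]) (use mfD in simp)
      also have "\<dots> = (\<integral>\<^sup>+ v. wl (v k) * indicator G (T k v) \<partial>D)"
        using n1I by (simp add: T_def swp_def)
      finally show ?thesis .
    qed
    have AEu: "AE v in D. \<forall>i\<in>I. snd (v i) \<in> {0..1}"
    proof (rule AE_finite_allI[OF fI])
      fix i assume i: "i \<in> I"
      have "AE s in PU. snd s \<in> {0..1}"
      proof -
        interpret PS: pair_sigma_finite P U0
          by (simp add: pair_sigma_finite_def prob_space_imp_sigma_finite assms(1) pU0)
        have "{x \<in> space (P \<Otimes>\<^sub>M U0). snd x \<in> {0..1}} = snd -` {0..1} \<inter> space (P \<Otimes>\<^sub>M U0)" by auto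
        also have "\<dots> \<in> sets (P \<Otimes>\<^sub>M U0)"
          by (rule measurable_sets[OF measurable_snd]) (simp add: sU0)
        finally have ms: "{x \<in> space (P \<Otimes>\<^sub>M U0). snd x \<in> {0..1}} \<in> sets (P \<Otimes>\<^sub>M U0)" .
        have "AE y in U0. y \<in> {0..1::real}" unfolding U0_def by (rule AE_uniform_measureI) auto
        hence "AE x in P. AE y in U0. snd (x, y) \<in> {0..1::real}" by simp
        thus ?thesis unfolding PU_def by (rule PS.AE_pair_measure[OF ms])
      qed
      thus "AE v in D. snd (v i) \<in> {0..1}"
        unfolding D_def by (rule AE_PiM_component[OF pPU i])
    qed
    have pw: "ennreal \<beta> * (\<Sum>k\<in>I. wl (v k)) \<le> (\<Sum>k\<in>I. wl (v k) * indicator G (T k v))"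
      if v: "v \<in> space D" and u: "\<forall>i\<in>I. snd (v i) \<in> {0..1}" for v
    proof -
      have vS: "v \<in> space (PiM I (\<lambda>_. S))" using v spD by simp
      define a where "a = (\<lambda>j. w (lab v j))"
      define r where "r = sc K pihat v"
      have labI: "lab v j \<in> {1..K}" if "j \<in> I" for j using spPi[OF vS that] by (auto simp: lab_def)
      have a0: "\<forall>j\<in>I. 0 \<le> a j" using labI wnn a_def by auto
      have r1: "\<forall>j\<in>I. r j \<le> 1"
      proof
        fix j assume j: "j \<in> I"
        have x: "fst (fst (v j)) \<in> space MX" using spPi[OF vS j] by auto
        show "r j \<le> 1" unfolding r_def sc_def
          by (rule score_le1) (use pihat_simplex x labI[OF j] u j in \<open>auto simp: lab_def\<close>)
      qed
      have cr: "\<beta> * (\<Sum>i\<in>I. a i) \<le> (\<Sum>k\<in>I. a k * (if r k \<le> Inf {z. Fd I (\<lambda>j. a j / (\<Sum>i\<in>I. a i)) (r(k:=1)) z \<ge> \<beta>} then 1 else 0))"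
        by (rule core[OF fI a0 r1 b])
      have ind: "indicator G (T k v) = (if r k \<le> Inf {z. Fd I (\<lambda>j. a j / (\<Sum>i\<in>I. a i)) (r(k:=1)) z \<ge> \<beta>} then 1 else (0::ennreal))"
        if k: "k \<in> I" for k
      proof -
        have Tv: "T k v \<in> space (PiM I (\<lambda>_. S))" using measurable_space[OF Tm[OF k] v] spD by simp
        have "good K pihat w n \<alpha> (T k v) \<longleftrightarrow> lab v k \<in> {1..K} \<and>
          sc K pihat v k \<le> Inf {z. Fd {1..n+1} (\<lambda>j. w (lab v j) / (\<Sum>i\<in>{1..n+1}. w (lab v i)))
                               ((sc K pihat v)(k:=1)) z \<ge> 1 - \<alpha>}"
          unfolding T_def I_def by (rule good_perm) (use k I_def in simp)
        hence "good K pihat w n \<alpha> (T k v) \<longleftrightarrow> r k \<le> Inf {z. Fd I (\<lambda>j. a j / (\<Sum>i\<in>I. a i)) (r(k:=1)) z \<ge> \<beta>}"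
          using labI[OF k] unfolding a_def r_def \<beta>_def I_def by simp
        thus ?thesis using Tv unfolding G_def indicator_def by auto
      qed
      have "(\<Sum>k\<in>I. wl (v k) * indicator G (T k v)) =
            (\<Sum>k\<in>I. ennreal (a k * (if r k \<le> Inf {z. Fd I (\<lambda>j. a j / (\<Sum>i\<in>I. a i)) (r(k:=1)) z \<ge> \<beta>} then 1 else 0)))"
        using ind unfolding wl_def a_def lab_def by (intro sum.cong refl) auto
      also have "\<dots> = ennreal (\<Sum>k\<in>I. a k * (if r k \<le> Inf {z. Fd I (\<lambda>j. a j / (\<Sum>i\<in>I. a i)) (r(k:=1)) z \<ge> \<beta>} then 1 else 0))"
        using a0 by (intro sum_ennreal) auto
      finally have e1: "(\<Sum>k\<in>I. wl (v k) * indicator G (T k v)) = ennreal (\<Sum>k\<in>I. a k * (if r k \<le> Inf {z. Fd I (\<lambda>j. a j / (\<Sum>i\<in>I. a i)) (r(k:=1)) z \<ge> \<beta>} then 1 else 0))" .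
      have "ennreal \<beta> * (\<Sum>k\<in>I. wl (v k)) = ennreal \<beta> * ennreal (\<Sum>i\<in>I. a i)"
        using a0 unfolding wl_def a_def lab_def by (subst sum_ennreal) auto
      also have "\<dots> = ennreal (\<beta> * (\<Sum>i\<in>I. a i))"
        using b sum_nonneg[of I a] a0 by (subst ennreal_mult) auto
      finally show ?thesis unfolding e1 using cr by (simp add: ennreal_leI)
    qed
    have stepF: "(\<integral>\<^sup>+ v. ennreal \<beta> * (\<Sum>k\<in>I. wl (v k)) \<partial>D) \<le> (\<integral>\<^sup>+ v. (\<Sum>k\<in>I. wl (v k) * indicator G (T k v)) \<partial>D)"
    proof (rule nn_integral_mono_AE)
      show "AE v in D. ennreal \<beta> * (\<Sum>k\<in>I. wl (v k)) \<le> (\<Sum>k\<in>I. wl (v k) * indicator G (T k v))"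
        using AEu AE_space[of D] by eventually_elim (rule pw)
    qed
    have stepG: "(\<integral>\<^sup>+ v. wl (v k) \<partial>D) = 1" if k: "k \<in> I" for k
    proof -
      have cm: "(\<lambda>v. v k) \<in> measurable D PU" unfolding D_def by (rule measurable_component_singleton[OF k])
      have "(\<integral>\<^sup>+ v. wl (v k) \<partial>D) = (\<integral>\<^sup>+ s. wl s \<partial>(distr D PU (\<lambda>v. v k)))"
        by (rule nn_integral_distr[OF cm, symmetric]) (simp add: wlPU)
      also have "distr D PU (\<lambda>v. v k) = PU"
        unfolding D_def by (rule distr_PiM_component[OF _ k]) (rule pPU)
      also have "(\<integral>\<^sup>+ s. wl s \<partial>PU) = (\<integral>\<^sup>+ s. 1 \<partial>QU)"
        unfolding QUd by (subst nn_integral_density[OF wlPU]) simp_all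
      also have "\<dots> = 1" using prob_space.emeasure_space_1[OF pQU] by simp
      finally show ?thesis .
    qed
    have "of_nat (n+1) * E = (\<Sum>k\<in>I. E)" using cI by simp
    also have "\<dots> = (\<Sum>k\<in>I. \<integral>\<^sup>+ v. wl (v k) * indicator G (T k v) \<partial>D)"
      using stepE by (intro sum.cong) auto
    also have "\<dots> = (\<integral>\<^sup>+ v. (\<Sum>k\<in>I. wl (v k) * indicator G (T k v)) \<partial>D)"
    proof (rule nn_integral_sum[symmetric])
      fix k assume k: "k \<in> I"
      have "(\<lambda>v. indicator G (T k v) :: ennreal) \<in> borel_measurable D"
        by (rule measurable_compose[OF Tm[OF k]]) (use GsD in simp)
      thus "(\<lambda>v. wl (v k) * indicator G (T k v)) \<in> borel_measurable D"
        using wlDm[OF k] by (intro borel_measurable_times_ennreal) auto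
    qed
    also have "\<dots> \<ge> (\<integral>\<^sup>+ v. ennreal \<beta> * (\<Sum>k\<in>I. wl (v k)) \<partial>D)" by (rule stepF)
    also have "(\<integral>\<^sup>+ v. ennreal \<beta> * (\<Sum>k\<in>I. wl (v k)) \<partial>D) = ennreal \<beta> * (\<Sum>k\<in>I. \<integral>\<^sup>+ v. wl (v k) \<partial>D)"
      using wlDm by (simp add: nn_integral_cmult nn_integral_sum borel_measurable_sum)
    also have "\<dots> = of_nat (n+1) * ennreal \<beta>" using stepG cI by (simp add: mult.commute)
    finally have "of_nat (n+1) * ennreal \<beta> \<le> of_nat (n+1) * E" .
    hence "ennreal \<beta> \<le> E" by (subst (asm) ennreal_mult_le_mult_iff) auto
    thus ?thesis unfolding E_def .
  qed
  interpret PI: prob_space "PiM I Mi" by (rule prob_space_PiM) (use pMi in auto)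
  have "measure (PiM I Mi) G \<ge> \<beta>"
    using main PI.emeasure_eq_measure b by (simp add: ennreal_le_iff)
  thus ?thesis using ev mG \<beta>_def by simp
qed

end
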